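(* Let $W:\mathbb R\to SO(4)$ be a symmetric loop which is not null-homotopic as a loop in $SO(4)$, and let $\tilde W$ be a continuous lift of $W$; then $\tilde W(k+2\pi)=-\tilde W(k)$ for all $k$. (a) If $T(\tilde W(0))=\tilde W(0)$, then $T(\tilde W(\pi))=-\tilde W(\pi)$, i.e. $\tilde W(\pi)\in X_1\sqcup Y_1$. (b) If $T(\tilde W(0))=-\tilde W(0)$, then $T(\tilde W(\pi))=\tilde W(\pi)$, i.e. $\tilde W(\pi)\in X_0\sqcup Y_0$.
   Context: Identify $\mathbb H$ with $\mathbb R^4$ via $x_0+x_1i+x_2j+x_3k\leftrightarrow(x_0,x_1,x_2,x_3)^T$; $Sp(1)$ is the group of unit quaternions, with componentwise product and conjugation on $Sp(1)\times Sp(1)$. Let $p:Sp(1)\times Sp(1)\to SO(4)$ send $(g,h)$ to the matrix of the $\mathbb R$-linear map $x\mapsto g^{-1}xh$ (a two-to-one covering map with kernel $\{\pm(1,1)\}$). Let $w=\begin{pmatrix}0&-I_2\\ I_2&0\end{pmatrix}$, $\tilde w=(1,j)$, and $T(u,v)=\overline{\tilde w^{-1}(u,v)\tilde w}=(\bar u,\ j^{-1}\bar v j)$. Let $X_0=\{(1,a+bi+dk):a^2+b^2+d^2=1\}$, $Y_0=-X_0$, $X_1=\{(bi+cj+dk,\ j):b^2+c^2+d^2=1\}$, $Y_1=\{(bi+cj+dk,\ -j):b^2+c^2+d^2=1\}$. A symmetric loop is a continuous $2\pi$-periodic map $W:\mathbb R\to SO(4)$ with $wW(k)w^{-1}=W(-k)^{-1}$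 for all $k$. A lift of $W$ is a continuous $\tilde W:\mathbb R\to Sp(1)\times Sp(1)$ with $p\circ\tilde W=W$. (Physically: non-vanishing Fu–Kane–Mele invariant.) *)

theory Defs
  imports "HOL-Analysis.Analysis"
begin

text \<open>Quaternions x0 + x1 i + x2 j + x3 k are identified with vectors in real^4,
  with x$1 = x0, x$2 = x1, x$3 = x2, x$4 = x3.\<close>

type_synonym quat = "real ^ 4"

definition quat :: "real \<Rightarrow> real \<Rightarrow> real \<Rightarrow> real \<Rightarrow> quat" where
  "quat a b c d = vector [a, b, c, d]"

definition qmult :: "quat \<Rightarrow> quat \<Rightarrow> quat" where
  "qmult x y = quat
     (x$1 * y$1 - x$2 * y$2 - x$3 * y$3 - x$4 * y$4)
     (x$1 * y$2 + x$2 * y$1 + x$3 * y$4 - x$4 * y$3)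
     (x$1 * y$3 - x$2 * y$4 + x$3 * y$1 + x$4 * y$2)
     (x$1 * y$4 + x$2 * y$3 - x$3 * y$2 + x$4 * y$1)"

definition qconj :: "quat \<Rightarrow> quat" where
  "qconj x = quat (x$1) (- x$2) (- x$3) (- x$4)"

definition qinv :: "quat \<Rightarrow> quat" where
  "qinv x = (inverse ((norm x)\<^sup>2)) *\<^sub>R qconj x"

definition qone :: quat where "qone = quat 1 0 0 0"
definition qi :: quat where "qi = quat 0 1 0 0"
definition qj :: quat where "qj = quat 0 0 1 0"
definition qk :: quat where "qk = quat 0 0 0 1"

definition Sp1 :: "quat set" where
  "Sp1 = {x. norm x = 1}"

definition SO4 :: "(real ^ 4 ^ 4) set" where
  "SO4 = {A. orthogonal_matrix A \<and> det A = 1}"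

definition pcov :: "quat \<times> quat \<Rightarrow> real ^ 4 ^ 4" where
  "pcov gh = matrix (\<lambda>x. qmult (qmult (qinv (fst gh)) x) (snd gh))"

definition wmat :: "real ^ 4 ^ 4" where
  "wmat = (\<chi> r c. if r = 1 \<and> c = 3 then -1 else if r = 2 \<and> c = 4 then -1
                  else if r = 3 \<and> c = 1 then 1 else if r = 4 \<and> c = 2 then 1 else 0)"

definition Tmap :: "quat \<times> quat \<Rightarrow> quat \<times> quat" where
  "Tmap uv = (qconj (fst uv), qmult (qmult (qinv qj) (qconj (snd uv))) qj)"

definition X0 :: "(quat \<times> quat) set" where
  "X0 = {(qone, quat a b 0 d) | a b d. a\<^sup>2 + b\<^sup>2 + d\<^sup>2 = 1}"
definition Y0 :: "(quat \<times> quat) set" where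
  "Y0 = uminus ` X0"
definition X1 :: "(quat \<times> quat) set" where
  "X1 = {(quat 0 b c d, qj) | b c d. b\<^sup>2 + c\<^sup>2 + d\<^sup>2 = 1}"
definition Y1 :: "(quat \<times> quat) set" where
  "Y1 = {(quat 0 b c d, - qj) | b c d. b\<^sup>2 + c\<^sup>2 + d\<^sup>2 = 1}"

definition symmetric_loop :: "(real \<Rightarrow> real ^ 4 ^ 4) \<Rightarrow> bool" where
  "symmetric_loop W \<longleftrightarrow> continuous_on UNIV W \<and> (\<forall>k. W k \<in> SO4) \<and>
     (\<forall>k. W (k + 2 * pi) = W k) \<and>
     (\<forall>k. wmat ** W k ** matrix_inv wmat = matrix_inv (W (- k)))"

definition null_homotopic_loop_SO4 :: "(real \<Rightarrow> real ^ 4 ^ 4) \<Rightarrow> bool" where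
  "null_homotopic_loop_SO4 W \<longleftrightarrow>
     (\<exists>a. homotopic_loops SO4 (\<lambda>t. W (2 * pi * t)) (\<lambda>t. a))"

definition is_lift :: "(real \<Rightarrow> real ^ 4 ^ 4) \<Rightarrow> (real \<Rightarrow> quat \<times> quat) \<Rightarrow> bool" where
  "is_lift W Wt \<longleftrightarrow> continuous_on UNIV Wt \<and> (\<forall>k. Wt k \<in> Sp1 \<times> Sp1) \<and>
     (\<forall>k. pcov (Wt k) = W k)"

end

theory Submission
  imports Defs
begin


lemma quat_comp[simp]: "quat a b c d $ 1 = a" "quat a b c d $ 2 = b" "quat a b c d $ 3 = c" "quat a b c d $ 4 = d"
  by (simp_all add: quat_def vector_def)

lemma quat_eq_iff: "(x::quat) = y \<longleftrightarrow> x$1 = y$1 \<and> x$2 = y$2 \<and> x$3 = y$3 \<and> x$4 = y$4"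
  by (simp add: vec_eq_iff forall_4)

lemma qnorm_sq: "(norm (x::quat))\<^sup>2 = (x$1)\<^sup>2 + (x$2)\<^sup>2 + (x$3)\<^sup>2 + (x$4)\<^sup>2"
  by (simp add: norm_eq_sqrt_inner inner_vec_def sum_4 power2_eq_square)

lemma qmult_assoc: "qmult (qmult x y) z = qmult x (qmult y z)"
  by (simp add: quat_eq_iff qmult_def algebra_simps)

lemma qmult_one[simp]: "qmult qone x = x" "qmult x qone = x"
  by (simp_all add: quat_eq_iff qmult_def qone_def)

lemma qmult_neg[simp]: "qmult (-x) y = - qmult x y" "qmult x (-y) = - qmult x y"
  by (simp_all add: quat_eq_iff qmult_def algebra_simps)

lemma qconj_neg[simp]: "qconj (-x) = - qconj x" and qconj_qconj[simp]: "qconj (qconj x) = x"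
  and qconj_one[simp]: "qconj qone = qone"
  by (simp_all add: quat_eq_iff qconj_def qone_def)

lemma qconj_mult: "qconj (qmult x y) = qmult (qconj y) (qconj x)"
  by (simp add: quat_eq_iff qconj_def qmult_def algebra_simps)

lemma qmult_conj_self_gen: "qmult (qconj x) x = (norm x)\<^sup>2 *\<^sub>R qone" "qmult x (qconj x) = (norm x)\<^sup>2 *\<^sub>R qone"
  by (simp_all add: quat_eq_iff qconj_def qmult_def qone_def qnorm_sq) (simp_all add: power2_eq_square)

lemma qmult_conj_self: "norm x = 1 \<Longrightarrow> qmult (qconj x) x = qone" "norm x = 1 \<Longrightarrow> qmult x (qconj x) = qone"
  by (simp_all add: qmult_conj_self_gen)

lemma norm_qconj[simp]: "norm (qconj x) = norm x"
proof -
  have "(norm (qconj x))\<^sup>2 = (norm x)\<^sup>2" by (simp add: qnorm_sq qconj_def)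
  then show ?thesis by (simp add: power2_eq_iff_nonneg)
qed

lemma norm_qmult: "norm (qmult x y) = norm x * norm y"
proof -
  have "(norm (qmult x y))\<^sup>2 = (norm x * norm y)\<^sup>2"
    by (simp add: qnorm_sq qmult_def power_mult_distrib) (simp add: power2_eq_square algebra_simps)
  then show ?thesis by (simp add: power2_eq_iff_nonneg)
qed

lemma qinv_unit: "norm x = 1 \<Longrightarrow> qinv x = qconj x"
  by (simp add: qinv_def)

lemma norm_qone[simp]: "norm qone = 1"
  by (simp add: norm_eq_sqrt_inner inner_vec_def sum_4 qone_def)
lemma norm_qj[simp]: "norm qj = 1"
  by (simp add: norm_eq_sqrt_inner inner_vec_def sum_4 qj_def)

lemma kernel:
  assumes a: "norm a = 1" and h: "\<And>x. qmult (qmult a x) b = x"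
  shows "(a = qone \<and> b = qone) \<or> (a = - qone \<and> b = - qone)"
proof -
  have ab: "qmult a b = qone" using h[of qone] by simp
  have b: "b = qconj a"
    by (metis ab a qmult_assoc qmult_conj_self(1) qmult_one)
  have "qmult a qi = qmult qi a"
    by (metis h b a qmult_assoc qmult_conj_self(1) qmult_one(2))
  moreover have "qmult a qj = qmult qj a"
    by (metis h b a qmult_assoc qmult_conj_self(1) qmult_one(2))
  ultimately have z: "a$2 = 0" "a$3 = 0" "a$4 = 0"
    by (auto simp: quat_eq_iff qmult_def qi_def qj_def)
  have "(a$1)\<^sup>2 = 1" using a qnorm_sq[of a] z by simp
  then have "a$1 = 1 \<or> a$1 = -1" by (simp add: power2_eq_1_iff)
  then show ?thesis using z b
    by (auto simp: quat_eq_iff qone_def qconj_def)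
qed


definition LR :: "quat \<Rightarrow> quat \<Rightarrow> quat \<Rightarrow> quat" where
  "LR g h x = qmult (qmult (qconj g) x) h"

lemma linear_LR: "linear (LR g h)"
  by (rule linearI) (simp_all add: LR_def quat_eq_iff qmult_def qconj_def algebra_simps)

lemma pcov_eq: "norm g = 1 \<Longrightarrow> pcov (g,h) = matrix (LR g h)"
  by (simp add: pcov_def qinv_unit LR_def[abs_def])

lemma pcov_apply: "norm g = 1 \<Longrightarrow> pcov (g,h) *v x = LR g h x"
  using pcov_eq matrix_works[of "LR g h"] linear_LR
  by (metis linear_def scalar_mult_eq_scaleR)

lemma wmat_apply: "wmat *v x = qmult x qj"
  by (simp add: wmat_def matrix_vector_mult_def sum_4 quat_eq_iff qmult_def qj_def)

lemma orth_LR: "norm g = 1 \<Longrightarrow> norm h = 1 \<Longrightarrow> orthogonal_transformation (LR g h)"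
  by (simp add: orthogonal_transformation linear_LR LR_def norm_qmult)

lemma orth_pcov: "norm g = 1 \<Longrightarrow> norm h = 1 \<Longrightarrow> orthogonal_matrix (pcov (g,h))"
  using orth_LR orthogonal_transformation_matrix pcov_eq by metis

lemma cont_qmult[continuous_intros]:
  assumes "continuous_on S f" "continuous_on S g"
  shows "continuous_on S (\<lambda>z. qmult (f z) (g z))"
proof -
  have e: "(\<lambda>z. qmult (f z) (g z)) = (\<lambda>z. \<chi> i. qmult (f z) (g z) $ i)" by simp
  show ?thesis unfolding e
  proof (rule continuous_on_vec_lambda)
    fix i :: 4
    show "continuous_on S (\<lambda>z. qmult (f z) (g z) $ i)"
      by (insert exhaust_4[of i]; elim disjE; simp add: qmult_def; intro continuous_intros assms)
  qed
qed

lemma cont_qconj[continuous_intros]: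
  assumes "continuous_on S f"
  shows "continuous_on S (\<lambda>z. qconj (f z))"
proof -
  have e: "(\<lambda>z. qconj (f z)) = (\<lambda>z. \<chi> i. qconj (f z) $ i)" by simp
  show ?thesis unfolding e
  proof (rule continuous_on_vec_lambda)
    fix i :: 4
    show "continuous_on S (\<lambda>z. qconj (f z) $ i)"
      by (insert exhaust_4[of i]; elim disjE; simp add: qconj_def; intro continuous_intros assms)
  qed
qed

lemma cont_det: "continuous_on S M \<Longrightarrow> continuous_on S (\<lambda>x. det (M x :: real^'n^'n))"
  unfolding det_def by (intro continuous_intros continuous_on_component)

definition S2 :: "(quat \<times> quat) set" where "S2 = Sp1 \<times> Sp1"

lemma Sp1_sphere: "Sp1 = sphere 0 1"
  by (auto simp: Sp1_def)

lemma cont_pcov: "continuous_on S2 pcov"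
proof -
  have "continuous_on S2 (\<lambda>gh. \<chi> i j. LR (fst gh) (snd gh) (axis j 1) $ i)"
    unfolding LR_def by (intro continuous_intros)
  moreover have "\<And>gh. gh \<in> S2 \<Longrightarrow> pcov gh = (\<chi> i j. LR (fst gh) (snd gh) (axis j 1) $ i)"
    by (auto simp: S2_def Sp1_def pcov_eq matrix_def)
  ultimately show ?thesis using continuous_on_eq by (metis (no_types, lifting))
qed

lemma pcov_SO4: "pcov \<in> S2 \<rightarrow> SO4"
proof -
  have orth: "orthogonal_matrix (pcov gh)" if "gh \<in> S2" for gh
    using that orth_pcov by (cases gh) (auto simp: S2_def Sp1_def)
  have c: "continuous_on S2 (\<lambda>gh. det (pcov gh))" by (rule cont_det[OF cont_pcov])
  have cS: "connected S2" unfolding S2_def Sp1_sphere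
    by (intro connected_Times connected_sphere) simp_all
  have conn: "connected ((\<lambda>gh. det (pcov gh)) ` S2)"
    by (rule connected_continuous_image[OF c cS])
  have one: "(qone, qone) \<in> S2" by (simp add: S2_def Sp1_def)
  have "pcov (qone,qone) = mat 1"
  proof -
    have "LR qone qone = id" by (rule ext) (simp add: LR_def)
    then show ?thesis by (simp add: pcov_eq matrix_id_mat_1)
  qed
  then have "det (pcov (qone,qone)) = 1" by simp
  then have d1: "1 \<in> (\<lambda>gh. det (pcov gh)) ` S2" using one by force
  have "det (pcov gh) = 1" if "gh \<in> S2" for gh
  proof (rule ccontr)
    assume "det (pcov gh) \<noteq> 1"
    then have m: "det (pcov gh) = -1" using det_orthogonal_matrix orth that by blast
    have "-1 \<in> (\<lambda>gh. det (pcov gh)) ` S2" using that m by (metis image_eqI)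
    then have "{-1..1} \<subseteq> (\<lambda>gh. det (pcov gh)) ` S2"
      using conn d1 connected_contains_Icc by blast
    then have "(0::real) \<in> (\<lambda>gh. det (pcov gh)) ` S2" by auto
    then obtain z where "z \<in> S2" "det (pcov z) = 0" by auto
    then show False using det_orthogonal_matrix orth by fastforce
  qed
  then show ?thesis using orth by (auto simp: SO4_def)
qed





lemma cancel:
  assumes "norm g = 1"
  shows "qmult (qconj g) (qmult g y) = y" "qmult g (qmult (qconj g) y) = y"
  using assms by (simp_all flip: qmult_assoc add: qmult_conj_self)

lemma eps_cases: "(a = qone \<and> b = qone) \<or> (a = - qone \<and> b = - qone) \<Longrightarrow>
   (\<And>e. (e = qone \<or> e = -qone) \<Longrightarrow> a = e \<Longrightarrow> b = e \<Longrightarrow> P) \<Longrightarrow> P"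
  by blast

lemma kerP:
  assumes n: "norm g = 1" "norm h = 1" "norm g' = 1" "norm h' = 1"
    and eq: "\<And>x. LR g' h' x = LR g h x"
  shows "(g',h') = (g,h) \<or> (g',h') = - (g,h)"
proof -
  let ?a = "qmult g (qconj g')" and ?b = "qmult h' (qconj h)"
  have "qmult (qmult ?a x) ?b = x" for x
  proof -
    have "qmult (qmult ?a x) ?b = qmult g (qmult (LR g' h' x) (qconj h))"
      by (simp add: LR_def qmult_assoc)
    also have "\<dots> = qmult g (qmult (LR g h x) (qconj h))" by (simp only: eq)
    also have "\<dots> = x" by (simp add: LR_def qmult_assoc cancel n qmult_conj_self)
    finally show ?thesis .
  qed
  moreover have "norm ?a = 1" by (simp add: norm_qmult n)
  ultimately have k: "(?a = qone \<and> ?b = qone) \<or> (?a = - qone \<and> ?b = - qone)" using kernel by blast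
  show ?thesis
  proof (rule eps_cases[OF k])
    fix e assume e: "e = qone \<or> e = -qone" and a: "?a = e" and b: "?b = e"
    have "qconj g' = qmult (qconj g) (qmult g (qconj g'))" by (simp only: cancel n)
    then have "qconj g' = qmult (qconj g) e" by (simp only: a)
    then have "qconj (qconj g') = qconj (qmult (qconj g) e)" by simp
    then have g': "g' = qmult (qconj e) g" by (simp add: qconj_mult)
    have "h' = qmult (qmult h' (qconj h)) h" by (simp add: qmult_assoc qmult_conj_self n)
    then have h': "h' = qmult e h" by (simp only: b)
    show ?thesis using e g' h' by auto
  qed
qed

lemma kerT:
  assumes n: "norm g = 1" "norm h = 1" "norm g' = 1" "norm h' = 1"
    and eq: "\<And>x. LR g' h' (qmult (LR g h x) qj) = qmult x qj"
  shows "(g',h') = Tmap (g,h) \<or> (g',h') = - Tmap (g,h)"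
proof -
  let ?a = "qmult (qconj g') (qconj g)" and ?b = "qmult h (qmult qj (qmult h' (qconj qj)))"
  have "qmult (qmult ?a x) ?b = x" for x
  proof -
    have "qmult (qmult ?a x) ?b = qmult (LR g' h' (qmult (LR g h x) qj)) (qconj qj)"
      by (simp add: LR_def qmult_assoc)
    also have "\<dots> = x" by (simp add: eq qmult_assoc qmult_conj_self)
    finally show ?thesis .
  qed
  moreover have "norm ?a = 1" by (simp add: norm_qmult n)
  ultimately have k: "(?a = qone \<and> ?b = qone) \<or> (?a = - qone \<and> ?b = - qone)" using kernel by blast
  show ?thesis
  proof (rule eps_cases[OF k])
    fix e assume e: "e = qone \<or> e = -qone" and a: "?a = e" and b: "?b = e"
    have "qconj g' = qmult (qmult (qconj g') (qconj g)) g" by (simp add: qmult_assoc qmult_conj_self n)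
    then have "qconj g' = qmult e g" by (simp only: a)
    then have "qconj (qconj g') = qconj (qmult e g)" by simp
    then have g': "g' = qmult (qconj g) (qconj e)" by (simp add: qconj_mult)
    have "h' = qmult (qconj qj) (qmult (qconj h) (qmult ?b qj))"
      by (simp add: qmult_assoc cancel n qmult_conj_self)
    then have h': "h' = qmult (qconj qj) (qmult (qconj h) (qmult e qj))" using b by simp
    show ?thesis using e g' h' by (auto simp: Tmap_def qinv_unit qmult_assoc)
  qed
qed

lemma sign_const:
  fixes f g :: "real \<Rightarrow> 'a::real_normed_vector"
  assumes cf: "continuous_on UNIV f" and cg: "continuous_on UNIV g"
    and fg: "\<And>k. f k = g k \<or> f k = - g k" and nz: "\<And>k. g k \<noteq> 0"
  shows "(\<forall>k. f k = g k) \<or> (\<forall>k. f k = - g k)"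
proof (rule ccontr)
  assume H: "\<not> ?thesis"
  then obtain k1 k2 where k1: "f k1 \<noteq> g k1" and k2: "f k2 \<noteq> - g k2" by blast
  let ?A = "{k. f k = g k}" and ?B = "{k. f k = - g k}"
  have c1: "closed ?A" by (rule closed_Collect_eq[OF cf cg])
  have c2: "closed ?B" by (rule closed_Collect_eq[OF cf]) (intro continuous_intros cg)
  have z: "x = 0" if "x = - x" for x :: 'a
  proof -
    have "(2::real) *\<^sub>R x = x + x" by (simp add: scaleR_2)
    also have "\<dots> = 0" using that by (metis add.right_inverse)
    finally show ?thesis by simp
  qed
  have d: "?A \<inter> ?B \<inter> UNIV = {}"
  proof (rule ccontr)
    assume "?A \<inter> ?B \<inter> UNIV \<noteq> {}"
    then obtain k where "f k = g k" "f k = - g k" by blast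
    then have "g k = - g k" by simp
    then show False using z nz by blast
  qed
  have u: "UNIV \<subseteq> ?A \<union> ?B" using fg by blast
  have a: "?A \<inter> UNIV \<noteq> {}" using k2 fg[of k2] by blast
  have b: "?B \<inter> UNIV \<noteq> {}" using k1 fg[of k1] by blast
  have "\<not> connected (UNIV::real set)"
    unfolding connected_closed using c1 c2 d u a b by blast
  then show False by simp
qed



lemma inv_props: "invertible (A::real^4^4) \<Longrightarrow> A ** matrix_inv A = mat 1 \<and> matrix_inv A ** A = mat 1"
  unfolding invertible_def matrix_inv_def by (rule someI_ex)

lemma orth_invertible: "orthogonal_matrix (A::real^4^4) \<Longrightarrow> invertible A"
  unfolding orthogonal_matrix_def invertible_def by blast

lemma wmat_orth: "orthogonal_matrix wmat"
  unfolding orthogonal_matrix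
  by (simp add: wmat_def matrix_matrix_mult_def transpose_def mat_def vec_eq_iff forall_4 sum_4)

lemma memb1:
  assumes n: "norm g = 1" "norm h = 1" and T: "Tmap (g,h) = - (g,h)"
  shows "(g,h) \<in> X1 \<union> Y1"
proof -
  have Tg: "qconj g = - g" and Th: "qmult (qmult (qconj qj) (qconj h)) qj = - h"
    using T by (simp_all add: Tmap_def qinv_unit)
  have g1: "g$1 = 0" using Tg by (simp add: quat_eq_iff qconj_def)
  have h: "h$1 = 0" "h$2 = 0" "h$4 = 0" using Th by (simp_all add: quat_eq_iff qconj_def qmult_def qj_def)
  have "(h$3)\<^sup>2 = 1" using n(2) qnorm_sq[of h] h by simp
  then have h3: "h$3 = 1 \<or> h$3 = -1" by (simp add: power2_eq_1_iff)
  have gs: "(g$2)\<^sup>2 + (g$3)\<^sup>2 + (g$4)\<^sup>2 = 1" using n(1) qnorm_sq[of g] g1 by simp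
  have ge: "g = quat 0 (g$2) (g$3) (g$4)" using g1 by (simp add: quat_eq_iff)
  show ?thesis
  proof (cases "h$3 = 1")
    case True
    then have "h = qj" using h by (simp add: quat_eq_iff qj_def)
    then show ?thesis using ge gs unfolding X1_def by blast
  next
    case False
    then have "h = - qj" using h h3 by (simp add: quat_eq_iff qj_def)
    then show ?thesis using ge gs unfolding Y1_def by blast
  qed
qed

lemma memb0:
  assumes n: "norm g = 1" "norm h = 1" and T: "Tmap (g,h) = (g,h)"
  shows "(g,h) \<in> X0 \<union> Y0"
proof -
  have Tg: "qconj g = g" and Th: "qmult (qmult (qconj qj) (qconj h)) qj = h"
    using T by (simp_all add: Tmap_def qinv_unit)
  have g: "g$2 = 0" "g$3 = 0" "g$4 = 0" using Tg by (simp_all add: quat_eq_iff qconj_def)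
  have h3: "h$3 = 0" using Th by (simp add: quat_eq_iff qconj_def qmult_def qj_def)
  have "(g$1)\<^sup>2 = 1" using n(1) qnorm_sq[of g] g by simp
  then have g1: "g$1 = 1 \<or> g$1 = -1" by (simp add: power2_eq_1_iff)
  have hs: "(h$1)\<^sup>2 + (h$2)\<^sup>2 + (h$4)\<^sup>2 = 1" using n(2) qnorm_sq[of h] h3 by simp
  show ?thesis
  proof (cases "g$1 = 1")
    case True
    then have "g = qone" using g by (simp add: quat_eq_iff qone_def)
    moreover have "h = quat (h$1) (h$2) 0 (h$4)" using h3 by (simp add: quat_eq_iff)
    ultimately show ?thesis using hs unfolding X0_def by blast
  next
    case False
    then have "g = - qone" using g g1 by (simp add: quat_eq_iff qone_def)
    moreover have "h = - quat (-h$1) (-h$2) 0 (-h$4)" using h3 by (simp add: quat_eq_iff)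
    moreover have "(qone, quat (-h$1) (-h$2) 0 (-h$4)) \<in> X0" using hs unfolding X0_def
      by (intro CollectI exI[of _ "-h$1"] exI[of _ "-h$2"] exI[of _ "-h$4"]) simp
    ultimately have "(g,h) = - (qone, quat (-h$1) (-h$2) 0 (-h$4))" by simp
    then show ?thesis using \<open>(qone, _) \<in> X0\<close> unfolding Y0_def by blast
  qed
qed


lemma neg_self_zero: "(x::quat \<times> quat) = - x \<Longrightarrow> x = 0"
proof -
  assume a: "x = - x"
  have "(2::real) *\<^sub>R x = x + x" by (simp add: scaleR_2)
  also have "\<dots> = 0" using a by (metis add.right_inverse)
  finally show ?thesis by simp
qed

theorem mainTheorem5:
  fixes W :: "real \<Rightarrow> real ^ 4 ^ 4" and Wt :: "real \<Rightarrow> quat \<times> quat"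
  assumes "symmetric_loop W"
    and "\<not> null_homotopic_loop_SO4 W"
    and "is_lift W Wt"
  shows "(\<forall>k. Wt (k + 2 * pi) = - Wt k)
    \<and> (Tmap (Wt 0) = Wt 0 \<longrightarrow> Tmap (Wt pi) = - Wt pi \<and> Wt pi \<in> X1 \<union> Y1)
    \<and> (Tmap (Wt 0) = - Wt 0 \<longrightarrow> Tmap (Wt pi) = Wt pi \<and> Wt pi \<in> X0 \<union> Y0)"
proof -
  from assms(1) have WSO: "\<And>k. W k \<in> SO4" and Wp: "\<And>k. W (k + 2*pi) = W k"
    and Ws: "\<And>k. wmat ** W k ** matrix_inv wmat = matrix_inv (W (- k))"
    unfolding symmetric_loop_def by auto
  from assms(3) have Wtc: "continuous_on UNIV Wt" and WtS: "\<And>k. Wt k \<in> Sp1 \<times> Sp1"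
    and Wtp: "\<And>k. pcov (Wt k) = W k"
    unfolding is_lift_def by auto
  have n1: "norm (fst (Wt k)) = 1" and n2: "norm (snd (Wt k)) = 1" for k
    using WtS[of k] by (auto simp: Sp1_def mem_Times_iff)
  have nz: "Wt k \<noteq> 0" for k
  proof
    assume "Wt k = 0" then show False using n1[of k] by simp
  qed
  have app: "W k *v x = LR (fst (Wt k)) (snd (Wt k)) x" for k x
    using pcov_apply[OF n1[of k], of "snd (Wt k)" x] Wtp[of k] by simp
  have pm: "Wt (k + 2*pi) = Wt k \<or> Wt (k + 2*pi) = - Wt k" for k
  proof -
    have "LR (fst (Wt (k+2*pi))) (snd (Wt (k+2*pi))) x = LR (fst (Wt k)) (snd (Wt k)) x" for x
      using app[of "k+2*pi" x] app[of k x] Wp[of k] by simp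
    then have "(fst (Wt (k+2*pi)), snd (Wt (k+2*pi))) = (fst (Wt k), snd (Wt k))
       \<or> (fst (Wt (k+2*pi)), snd (Wt (k+2*pi))) = - (fst (Wt k), snd (Wt k))"
      by (intro kerP n1 n2)
    then show ?thesis by simp
  qed
  have c2: "continuous_on UNIV (\<lambda>k. Wt (k + 2*pi))"
    by (rule continuous_on_compose2[OF Wtc]) (auto intro: continuous_intros)
  have anti: "\<forall>k. Wt (k + 2*pi) = - Wt k"
  proof -
    have "(\<forall>k. Wt (k + 2*pi) = Wt k) \<or> (\<forall>k. Wt (k + 2*pi) = - Wt k)"
      by (rule sign_const[OF c2 Wtc pm nz])
    moreover have "\<not> (\<forall>k. Wt (k + 2*pi) = Wt k)"
    proof
      assume per: "\<forall>k. Wt (k + 2*pi) = Wt k"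
      let ?p = "\<lambda>t. Wt (2*pi*t)"
      have "path ?p" unfolding path_def
        by (rule continuous_on_compose2[OF Wtc]) (auto intro: continuous_intros)
      moreover have "path_image ?p \<subseteq> S2" using WtS unfolding path_image_def S2_def by blast
      moreover have "pathfinish ?p = pathstart ?p"
        using per[rule_format, of 0] by (simp add: pathfinish_def pathstart_def)
      moreover have "Wt 0 \<in> S2" using WtS by (simp add: S2_def)
      moreover have "simply_connected S2" unfolding S2_def Sp1_sphere
        by (intro simply_connected_Times simply_connected_sphere) simp_all
      ultimately have "homotopic_loops S2 ?p (linepath (Wt 0) (Wt 0))"
        using simply_connected_eq_contractible_loop_any by blast
      then have "homotopic_loops SO4 (pcov \<circ> ?p) (pcov \<circ> linepath (Wt 0) (Wt 0))"
        by (rule homotopic_loops_continuous_image[OF _ cont_pcov pcov_SO4])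
      moreover have "pcov \<circ> ?p = (\<lambda>t. W (2*pi*t))" using Wtp by (auto simp: o_def)
      moreover have "pcov \<circ> linepath (Wt 0) (Wt 0) = (\<lambda>t. W 0)"
        by (simp add: linepath_refl o_def Wtp)
      ultimately have "null_homotopic_loop_SO4 W" unfolding null_homotopic_loop_SO4_def by auto
      then show False using assms(2) by simp
    qed
    ultimately show ?thesis by blast
  qed
  have inv0: "W (-k) ** wmat ** W k = wmat" for k
  proof -
    have iW: "W (-k) ** matrix_inv (W (-k)) = mat 1"
      using inv_props orth_invertible WSO[of "-k"] by (auto simp: SO4_def)
    have iw: "matrix_inv wmat ** wmat = mat 1"
      using inv_props orth_invertible wmat_orth by blast
    have "W (-k) ** wmat ** W k = (W (-k) ** wmat ** W k) ** (matrix_inv wmat ** wmat)"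
      by (simp add: iw)
    also have "\<dots> = W (-k) ** (wmat ** W k ** matrix_inv wmat) ** wmat"
      by (simp add: matrix_mul_assoc)
    also have "\<dots> = W (-k) ** matrix_inv (W (-k)) ** wmat" by (simp only: Ws)
    also have "\<dots> = wmat" by (simp add: iW)
    finally show ?thesis .
  qed
  have tm: "Wt (-k) = Tmap (Wt k) \<or> Wt (-k) = - Tmap (Wt k)" for k
  proof -
    have "LR (fst (Wt (-k))) (snd (Wt (-k))) (qmult (LR (fst (Wt k)) (snd (Wt k)) x) qj) = qmult x qj" for x
    proof -
      have "W (-k) *v (wmat *v (W k *v x)) = wmat *v x"
        by (simp add: matrix_vector_mul_assoc matrix_mul_assoc inv0)
      then show ?thesis by (simp add: app wmat_apply)
    qed
    then have "(fst (Wt (-k)), snd (Wt (-k))) = Tmap (fst (Wt k), snd (Wt k))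
       \<or> (fst (Wt (-k)), snd (Wt (-k))) = - Tmap (fst (Wt k), snd (Wt k))"
      by (intro kerT n1 n2)
    then show ?thesis by simp
  qed
  have cm: "continuous_on UNIV (\<lambda>k. Wt (-k))"
    by (rule continuous_on_compose2[OF Wtc]) (auto intro: continuous_intros)
  have cT: "continuous_on UNIV (\<lambda>k. Tmap (Wt k))"
    unfolding Tmap_def by (intro continuous_intros Wtc)
  have nzT: "Tmap (Wt k) \<noteq> 0" for k
  proof
    assume "Tmap (Wt k) = 0"
    then have "fst (Tmap (Wt k)) = 0" by simp
    then have "qconj (fst (Wt k)) = 0" by (simp add: Tmap_def)
    then show False using n1[of k] norm_qconj[of "fst (Wt k)"] by simp
  qed
  have sg: "(\<forall>k. Wt (-k) = Tmap (Wt k)) \<or> (\<forall>k. Wt (-k) = - Tmap (Wt k))"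
    by (rule sign_const[OF cm cT tm nzT])
  have ap: "Wt pi = - Wt (-pi)" using anti[rule_format, of "-pi"] by simp
  have np: "norm (fst (Wt pi)) = 1" "norm (snd (Wt pi)) = 1" by (rule n1, rule n2)
  show ?thesis
  proof (intro conjI impI)
    show "\<forall>k. Wt (k + 2 * pi) = - Wt k" by (rule anti)
  next
    assume h0: "Tmap (Wt 0) = Wt 0"
    have "\<forall>k. Wt (-k) = Tmap (Wt k)"
    proof (rule ccontr)
      assume "\<not> (\<forall>k. Wt (-k) = Tmap (Wt k))"
      then have "\<forall>k. Wt (-k) = - Tmap (Wt k)" using sg by blast
      then have "Wt (-0) = - Tmap (Wt 0)" by blast
      then have "Wt 0 = - Tmap (Wt 0)" by simp
      then have "Wt 0 = - Wt 0" using h0 by simp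
      then show False using neg_self_zero nz by blast
    qed
    then have "Tmap (Wt pi) = Wt (-pi)" by simp
    then show tp: "Tmap (Wt pi) = - Wt pi" using ap by simp
    then show "Wt pi \<in> X1 \<union> Y1" using memb1[OF np] by simp
  next
    assume h0: "Tmap (Wt 0) = - Wt 0"
    have "\<forall>k. Wt (-k) = - Tmap (Wt k)"
    proof (rule ccontr)
      assume "\<not> (\<forall>k. Wt (-k) = - Tmap (Wt k))"
      then have "\<forall>k. Wt (-k) = Tmap (Wt k)" using sg by blast
      then have "Wt (-0) = Tmap (Wt 0)" by blast
      then have "Wt 0 = Tmap (Wt 0)" by simp
      then have "Wt 0 = - Wt 0" using h0 by simp
      then show False using neg_self_zero nz by blast
    qed
    then have "Tmap (Wt pi) = - Wt (-pi)" by (metis minus_minus)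
    then show tp: "Tmap (Wt pi) = Wt pi" using ap by simp
    then show "Wt pi \<in> X0 \<union> Y0" using memb0[OF np] by simp
  qed
qed

end
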